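(* Let $K$ be a commutative field and $L$ a (possibly noncommutative) division ring containing $K$ in its center such that every element of $L\setminus K$ is transcendental over $K$. Let $A,B$ be nonzero finite-dimensional $K$-subspaces of $L$. Then $\dim_K\langle AB\rangle\geq\dim_KA+\dim_KB-1$.
   Context: For $S\subset L$, $\langle S\rangle$ denotes the $K$-subspace of $L$ spanned by $S$; $AB=\{ab\mid a\in A,b\in B\}$. *)

theory Defs
  imports Main
begin

definition is_subfield :: "'a::division_ring set \<Rightarrow> bool" where
  "is_subfield K \<longleftrightarrow> 0 \<in> K \<and> 1 \<in> K \<and>
     (\<forall>x\<in>K. \<forall>y\<in>K. x + y \<in> K \<and> x * y \<in> K) \<and>
     (\<forall>x\<in>K. - x \<in> K) \<and> (\<forall>x\<in>K. x \<noteq> 0 \<longrightarrow> inverse x \<in> K)"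

definition central :: "'a::division_ring set \<Rightarrow> bool" where
  "central K \<longleftrightarrow> (\<forall>k\<in>K. \<forall>x. k * x = x * k)"

definition algebraic_over :: "'a::division_ring set \<Rightarrow> 'a \<Rightarrow> bool" where
  "algebraic_over K x \<longleftrightarrow> (\<exists>(c::nat \<Rightarrow> 'a) n. (\<forall>i\<le>n. c i \<in> K) \<and> (\<exists>i\<le>n. c i \<noteq> 0)
      \<and> (\<Sum>i\<le>n. c i * x ^ i) = 0)"

definition transcendental_over :: "'a::division_ring set \<Rightarrow> 'a \<Rightarrow> bool" where
  "transcendental_over K x \<longleftrightarrow> \<not> algebraic_over K x"

definition Kspan :: "'a::division_ring set \<Rightarrow> 'a set \<Rightarrow> 'a set" where
  "Kspan K S = {(\<Sum>x\<in>F. c x * x) | F c. finite F \<and> F \<subseteq> S \<and> (\<forall>x\<in>F. c x \<in> K)}"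

definition Kindep :: "'a::division_ring set \<Rightarrow> 'a set \<Rightarrow> bool" where
  "Kindep K S \<longleftrightarrow> (\<forall>F c. finite F \<and> F \<subseteq> S \<and> (\<forall>x\<in>F. c x \<in> K) \<and> (\<Sum>x\<in>F. c x * x) = 0
      \<longrightarrow> (\<forall>x\<in>F. c x = 0))"

definition Ksubspace :: "'a::division_ring set \<Rightarrow> 'a set \<Rightarrow> bool" where
  "Ksubspace K V \<longleftrightarrow> 0 \<in> V \<and> (\<forall>x\<in>V. \<forall>y\<in>V. x + y \<in> V) \<and> (\<forall>k\<in>K. \<forall>x\<in>V. k * x \<in> V)"

definition Kfindim :: "'a::division_ring set \<Rightarrow> 'a set \<Rightarrow> bool" where
  "Kfindim K V \<longleftrightarrow> (\<exists>B. finite B \<and> B \<subseteq> V \<and> Kspan K B = V)"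

text \<open>Dimension = cardinality of a basis (well defined for finite-dimensional spaces).\<close>
definition Kdim :: "'a::division_ring set \<Rightarrow> 'a set \<Rightarrow> nat" where
  "Kdim K V = card (SOME B. B \<subseteq> V \<and> Kindep K B \<and> Kspan K B = V)"

definition setprod :: "'a::times set \<Rightarrow> 'a set \<Rightarrow> 'a set" where
  "setprod A B = {a * b | a b. a \<in> A \<and> b \<in> B}"

end

theory Submission
  imports Defs "HOL-Algebra.Embedded_Algebras"
begin

definition RR :: "'a::division_ring ring" where
  "RR = \<lparr>carrier = UNIV, monoid.mult = (*), one = 1, zero = 0, add = (+)\<rparr>"

lemma RR_simps [simp]:
  "carrier RR = UNIV" "mult RR = (*)" "one RR = 1" "zero RR = 0" "add RR = (+)"
  by (simp_all add: RR_def)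

lemma ring_RR: "ring (RR :: 'a::division_ring ring)"
proof -
  have "\<exists>y. x + y = 0" for x :: 'a
    using add.right_inverse by blast
  thus ?thesis
    unfolding RR_def
    by unfold_locales (auto simp: algebra_simps Units_def)
qed

interpretation R: ring "RR :: 'a::division_ring ring"
  by (rule ring_RR)

lemma RR_ainv [simp]: "a_inv RR x = - (x::'a::division_ring)"
  by (rule R.minus_equality) auto

lemma RR_setadd: "set_add RR V W = {v + w | v w. v \<in> V \<and> w \<in> W}"
  by (auto simp: set_add_def set_mult_def)

lemma sub_iff_subalgebra:
  assumes "is_subfield K"
  shows "Ksubspace K V \<longleftrightarrow> subalgebra K V (RR::'a::division_ring ring)"
proof
  assume V: "Ksubspace K V"
  have neg: "- x \<in> V" if "x \<in> V" for x
  proof -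
    have "- 1 \<in> K" using assms by (simp add: is_subfield_def)
    hence "(-1) * x \<in> V" using V that unfolding Ksubspace_def by blast
    thus ?thesis by simp
  qed
  show "subalgebra K V RR"
    apply (rule subalgebra.intro)
     apply (rule R.add.subgroupI)
    using V neg by (auto simp: Ksubspace_def subalgebra_axioms_def)
next
  assume "subalgebra K V (RR::'a ring)"
  then interpret S: subalgebra K V "RR::'a ring" .
  show "Ksubspace K V"
    unfolding Ksubspace_def
    using S.one_closed S.m_closed S.smult_closed by auto
qed

locale KL =
  fixes K :: "'a::division_ring set"
  assumes sf: "is_subfield K" and cen: "central K"
begin

lemma K0: "0 \<in> K" and K1: "1 \<in> K" and Kadd: "x \<in> K \<Longrightarrow> y \<in> K \<Longrightarrow> x + y \<in> K"
  and Kmul: "x \<in> K \<Longrightarrow> y \<in> K \<Longrightarrow> x * y \<in> K" and Kneg: "x \<in> K \<Longrightarrow> - x \<in> K"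
  and Kinv: "x \<in> K \<Longrightarrow> inverse x \<in> K"
  using sf unfolding is_subfield_def by auto

lemma Kcomm: "k \<in> K \<Longrightarrow> k * x = x * k"
  using cen unfolding central_def by blast

lemma subfield: "subfield K (RR::'a ring)"
proof (rule R.subfieldI)
  have "subring K (RR::'a ring)"
    by (rule R.subringI) (auto intro: K1 Kneg Kmul Kadd)
  thus "subcring K (RR::'a ring)"
    by (rule R.subcringI) (use Kcomm in auto)
  show "Units ((RR::'a ring)\<lparr>carrier := K\<rparr>) = K - {\<zero>\<^bsub>RR\<^esub>}"
    unfolding RR_simps
  proof
    show "Units ((RR::'a ring)\<lparr>carrier := K\<rparr>) \<subseteq> K - {0}"
      by (auto simp: Units_def)
    show "K - {0} \<subseteq> Units ((RR::'a ring)\<lparr>carrier := K\<rparr>)"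
      unfolding Units_def using Kinv
      by auto (metis left_inverse right_inverse)
  qed
qed

lemma sub_iff: "Ksubspace K V \<longleftrightarrow> subalgebra K V (RR::'a ring)"
  by (rule sub_iff_subalgebra[OF sf])

lemma Kspan_superset: "S \<subseteq> Kspan K S"
proof
  fix x assume x: "x \<in> S"
  show "x \<in> Kspan K S" unfolding Kspan_def
    apply (intro CollectI exI[of _ "{x}"] exI[of _ "\<lambda>_. 1"]) using K1 x by simp
qed

lemma Kspan_least:
  assumes V: "Ksubspace K V" and "S \<subseteq> V"
  shows "Kspan K S \<subseteq> V"
proof
  fix x assume "x \<in> Kspan K S"
  then obtain F c where x: "x = (\<Sum>y\<in>F. c y * y)" and F: "finite F" "F \<subseteq> S" "\<forall>y\<in>F. c y \<in> K"
    unfolding Kspan_def by blast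
  have "F \<subseteq> V \<Longrightarrow> (\<forall>y\<in>F. c y \<in> K) \<Longrightarrow> (\<Sum>y\<in>F. c y * y) \<in> V"
    using F(1)
  proof (induction F rule: finite_induct)
    case empty thus ?case using V unfolding Ksubspace_def by simp
  next
    case (insert a F)
    have 1: "c a * a \<in> V" using V insert.prems unfolding Ksubspace_def by blast
    have 2: "(\<Sum>y\<in>F. c y * y) \<in> V" using insert.IH insert.prems by blast
    have "(\<Sum>y\<in>insert a F. c y * y) = c a * a + (\<Sum>y\<in>F. c y * y)" using insert.hyps by simp
    thus ?case using V 1 2 unfolding Ksubspace_def by metis
  qed
  thus "x \<in> V" using x F assms(2) by blast
qed

lemma Kspan_sub: "Ksubspace K (Kspan K S)"
  unfolding Ksubspace_def
proof (intro conjI ballI)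
  have "(0::'a) = (\<Sum>y\<in>{}. (\<lambda>_. 0::'a) y * y) \<and> finite {} \<and> {} \<subseteq> S \<and> (\<forall>y\<in>{}. (\<lambda>_. 0::'a) y \<in> K)" by simp
  show "0 \<in> Kspan K S" unfolding Kspan_def
    apply (rule CollectI) apply (rule exI[of _ "{}"]) by auto
next
  fix x y assume "x \<in> Kspan K S" "y \<in> Kspan K S"
  then obtain F c G d where x: "x = (\<Sum>y\<in>F. c y * y)" and F: "finite F" "F \<subseteq> S" "\<forall>y\<in>F. c y \<in> K"
    and y: "y = (\<Sum>y\<in>G. d y * y)" and G: "finite G" "G \<subseteq> S" "\<forall>y\<in>G. d y \<in> K"
    unfolding Kspan_def by blast
  define e where "e z = (if z \<in> F then c z else 0) + (if z \<in> G then d z else 0)" for z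
  have "(\<Sum>z\<in>F \<union> G. e z * z) = (\<Sum>z\<in>F \<union> G. (if z \<in> F then c z else 0) * z) + (\<Sum>z\<in>F \<union> G. (if z \<in> G then d z else 0) * z)"
    unfolding e_def by (simp add: distrib_right sum.distrib)
  also have "(\<Sum>z\<in>F \<union> G. (if z \<in> F then c z else 0) * z) = x"
    unfolding x using F(1) G(1) by (intro sum.mono_neutral_cong_right) auto
  also have "(\<Sum>z\<in>F \<union> G. (if z \<in> G then d z else 0) * z) = y"
    unfolding y using F(1) G(1) by (intro sum.mono_neutral_cong_right) auto
  finally have "x + y = (\<Sum>z\<in>F \<union> G. e z * z)" ..
  moreover have "\<forall>z\<in>F \<union> G. e z \<in> K" using F G by (auto simp: e_def intro: Kadd K0)
  ultimately show "x + y \<in> Kspan K S" unfolding Kspan_def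
    apply (intro CollectI exI[of _ "F \<union> G"] exI[of _ e]) using F G by auto
next
  fix k x assume k: "k \<in> K" and "x \<in> Kspan K S"
  then obtain F c where x: "x = (\<Sum>y\<in>F. c y * y)" and F: "finite F" "F \<subseteq> S" "\<forall>y\<in>F. c y \<in> K"
    unfolding Kspan_def by blast
  have "k * x = (\<Sum>y\<in>F. (k * c y) * y)" unfolding x by (simp add: sum_distrib_left mult.assoc)
  moreover have "\<forall>y\<in>F. k * c y \<in> K" using F k by (auto intro: Kmul)
  ultimately show "k * x \<in> Kspan K S" unfolding Kspan_def
    apply (intro CollectI exI[of _ F] exI[of _ "\<lambda>y. k * c y"]) using F by auto
qed

lemma sub_Span: "Ksubspace K (R.Span K Us)"
  using R.Span_is_subalgebra[OF subfield] sub_iff by auto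

lemma Kspan_list: "Kspan K (set Us) = R.Span K Us"
proof
  show "Kspan K (set Us) \<subseteq> R.Span K Us"
    by (rule Kspan_least[OF sub_Span]) (use R.Span_base_incl[OF subfield, of Us] in auto)
  show "R.Span K Us \<subseteq> Kspan K (set Us)"
    by (rule R.subalgebra_Span_incl[OF subfield]) (use Kspan_sub sub_iff Kspan_superset in auto)
qed

lemma combine_sum: "length Ks = length Us \<Longrightarrow> R.combine Ks Us = (\<Sum>i<length Us. Ks!i * Us!i)"
proof (induction Us arbitrary: Ks)
  case Nil thus ?case by simp
next
  case (Cons u Us)
  then obtain k Ks' where Ks: "Ks = k # Ks'" "length Ks' = length Us" by (cases Ks) auto
  show ?case using Cons.IH[OF Ks(2)] unfolding Ks(1) length_Cons sum.lessThan_Suc_shift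
    by simp
qed

lemma combine_map: "distinct Us \<Longrightarrow> R.combine (map f Us) Us = (\<Sum>u\<in>set Us. f u * u)"
  by (induction Us) auto

lemma indep_Kindep:
  assumes ind: "R.independent K Us" shows "Kindep K (set Us)"
  unfolding Kindep_def
proof (intro allI impI)
  fix F c assume H: "finite F \<and> F \<subseteq> set Us \<and> (\<forall>x\<in>F. c x \<in> K) \<and> (\<Sum>x\<in>F. c x * x) = 0"
  define f where "f u = (if u \<in> F then c u else 0)" for u
  have dist: "distinct Us" using R.independent_distinct[OF subfield ind] .
  have "R.combine (map f Us) Us = (\<Sum>u\<in>set Us. f u * u)" using combine_map[OF dist] .
  also have "\<dots> = (\<Sum>x\<in>F. c x * x)"
    unfolding f_def using H by (intro sum.mono_neutral_cong_right) auto
  finally have "R.combine (map f Us) Us = \<zero>\<^bsub>RR\<^esub>" using H by simp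
  moreover have "set (map f Us) \<subseteq> K" using H K0 by (auto simp: f_def)
  ultimately have "set (take (length Us) (map f Us)) \<subseteq> {\<zero>\<^bsub>RR\<^esub>}"
    using R.independent_imp_trivial_combine[OF subfield ind] by blast
  hence "set (map f Us) \<subseteq> {0}" by simp
  show "\<forall>x\<in>F. c x = 0"
  proof
    fix x assume x: "x \<in> F"
    hence "f x \<in> set (map f Us)" using H by auto
    thus "c x = 0" using \<open>set (map f Us) \<subseteq> {0}\<close> x by (auto simp: f_def)
  qed
qed

lemma Kindep_indep:
  assumes dist: "distinct Us" and KI: "Kindep K (set Us)" shows "R.independent K Us"
proof (rule ccontr)
  assume dep: "\<not> R.independent K Us"
  obtain Ks where Ks: "length Ks = length Us" "R.combine Ks Us = \<zero>\<^bsub>RR\<^esub>" "set Ks \<subseteq> K" "set Ks \<noteq> {\<zero>\<^bsub>RR\<^esub>}"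
    using R.dependent_imp_non_trivial_combine[OF subfield _ dep] by auto
  define c where "c x = Ks ! (THE i. i < length Us \<and> Us ! i = x)" for x
  have th: "(THE j. j < length Us \<and> Us ! j = Us ! i) = i" if "i < length Us" for i
    by (rule the_equality) (use that dist nth_eq_iff_index_eq in auto)
  have map: "map c Us = Ks"
    by (rule nth_equalityI) (use Ks(1) th in \<open>auto simp: c_def\<close>)
  have "(\<Sum>u\<in>set Us. c u * u) = 0" using Ks(2) combine_map[OF dist, of c] map by simp
  moreover have "\<forall>x\<in>set Us. c x \<in> K" using Ks(3) map by auto
  ultimately have "\<forall>x\<in>set Us. c x = 0" using KI unfolding Kindep_def by blast
  hence "set Ks \<subseteq> {0}" using map by auto
  hence "Ks = []" using Ks(4) by (metis RR_simps(4) set_empty subset_singletonD)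
  hence "Us = []" using Ks(1) by simp
  thus False using dep by simp
qed

lemma Kindep_mono: "Kindep K S \<Longrightarrow> T \<subseteq> S \<Longrightarrow> Kindep K T"
  unfolding Kindep_def by blast

lemma Kspan_finite_fd: assumes "finite S" shows "R.finite_dimension K (Kspan K S)"
proof -
  obtain Us where "set Us = S" using finite_list[OF assms] by blast
  thus ?thesis using Kspan_list R.Span_finite_dimension[OF subfield] by auto
qed

lemma Kfindim_fd: "Kfindim K V \<Longrightarrow> R.finite_dimension K V"
  unfolding Kfindim_def using Kspan_finite_fd by auto

lemma fd_sub: "R.finite_dimension K V \<Longrightarrow> Ksubspace K V"
  using R.finite_dimension_imp_subalgebra[OF subfield] sub_iff by auto

lemma dim_dimension: "R.finite_dimension K V \<Longrightarrow> R.dimension (R.dim K V) K V"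
  using R.finite_dimensionE[OF subfield] unfolding over_def by blast

lemma dimI: "R.dimension n K V \<Longrightarrow> R.dim K V = n"
  using R.dimI[OF subfield] unfolding over_def by blast

lemma Kdim_eq:
  assumes fd: "R.finite_dimension K V" shows "Kdim K V = R.dim K V"
proof -
  define n where "n = R.dim K V"
  have dimV: "R.dimension n K V" using dim_dimension[OF fd] n_def by simp
  obtain Vs where Vs: "R.independent K Vs" "length Vs = n" "R.Span K Vs = V"
    using R.exists_base[OF subfield dimV] by blast
  let ?P = "\<lambda>B. B \<subseteq> V \<and> Kindep K B \<and> Kspan K B = V"
  have "?P (set Vs)"
    using indep_Kindep[OF Vs(1)] Kspan_list Vs(3) R.Span_base_incl[OF subfield, of Vs] by auto
  hence PB: "?P (SOME B. ?P B)" by (rule someI)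
  define B where "B = (SOME B. ?P B)"
  have PB: "?P B" using PB B_def by simp
  have cardle: "card F \<le> n" if FF: "F \<subseteq> B" "finite F" for F
  proof -
    obtain Us where Us: "set Us = F" "distinct Us" using finite_distinct_list[OF FF(2)] by blast
    have "Kindep K F" using Kindep_mono PB FF(1) by blast
    hence "R.independent K Us" using Kindep_indep Us by blast
    hence "length Us \<le> n" using R.independent_length_le_dimension[OF subfield dimV] Us PB FF(1) by blast
    thus ?thesis using Us distinct_card by metis
  qed
  have finB: "finite B"
  proof (rule ccontr)
    assume "infinite B"
    then obtain F where "F \<subseteq> B" "finite F" "card F = Suc n"
      using infinite_arbitrarily_large by blast
    thus False using cardle[of F] by simp
  qed
  obtain Us where Us: "set Us = B" "distinct Us" using finite_distinct_list[OF finB] by blast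
  have "R.independent K Us" using Kindep_indep Us PB by blast
  moreover have "R.Span K Us = V" using Kspan_list Us PB by metis
  ultimately have "R.dimension (length Us) K V" using R.dimensionI[OF subfield] by blast
  hence "length Us = n" using R.dimension_is_inj[OF subfield dimV] by simp
  hence "card B = n" using Us distinct_card by metis
  thus ?thesis unfolding Kdim_def B_def n_def by simp
qed

definition ssum :: "'a set \<Rightarrow> 'a set \<Rightarrow> 'a set" where
  "ssum V W = {v + w | v w. v \<in> V \<and> w \<in> W}"

lemma grassmann:
  assumes "R.finite_dimension K V" "R.finite_dimension K W"
  shows "R.finite_dimension K (ssum V W)"
    and "R.dim K (ssum V W) = R.dim K V + R.dim K W - R.dim K (V \<inter> W)"
  using R.sum_space_dim[OF subfield assms] unfolding over_def RR_setadd ssum_def by auto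

lemma sub_inter: "Ksubspace K V \<Longrightarrow> Ksubspace K W \<Longrightarrow> Ksubspace K (V \<inter> W)"
  unfolding Ksubspace_def by auto

lemma sub_ssum: assumes V: "Ksubspace K V" and W: "Ksubspace K W" shows "Ksubspace K (ssum V W)"
  unfolding Ksubspace_def
proof (intro conjI ballI)
  have "0 + 0 \<in> ssum V W" using V W unfolding ssum_def Ksubspace_def by blast
  thus "0 \<in> ssum V W" by simp
next
  fix x y assume "x \<in> ssum V W" "y \<in> ssum V W"
  then obtain a b c d where xy: "x = a + b" "y = c + d" "a \<in> V" "b \<in> W" "c \<in> V" "d \<in> W"
    unfolding ssum_def by blast
  have "a + c \<in> V" "b + d \<in> W" using V W xy unfolding Ksubspace_def by blast+
  moreover have "x + y = (a + c) + (b + d)" using xy by (simp add: algebra_simps)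
  ultimately show "x + y \<in> ssum V W" unfolding ssum_def by blast
next
  fix k x assume k: "k \<in> K" and "x \<in> ssum V W"
  then obtain a b where xy: "x = a + b" "a \<in> V" "b \<in> W" unfolding ssum_def by blast
  have "k * a \<in> V" "k * b \<in> W" using V W xy k unfolding Ksubspace_def by blast+
  moreover have "k * x = k * a + k * b" using xy by (simp add: algebra_simps)
  ultimately show "k * x \<in> ssum V W" unfolding ssum_def by blast
qed

lemma dim_mono:
  assumes W: "R.finite_dimension K W" and V: "Ksubspace K V" and VW: "V \<subseteq> W"
  shows "R.finite_dimension K V" and "R.dim K V \<le> R.dim K W"
proof -
  show fV: "R.finite_dimension K V"
    using R.subalbegra_incl_imp_finite_dimension[OF subfield W _ VW] V sub_iff by blast
  obtain Vs where Vs: "R.independent K Vs" "length Vs = R.dim K V" "R.Span K Vs = V"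
    using R.exists_base[OF subfield dim_dimension[OF fV]] by blast
  have "set Vs \<subseteq> W" using R.Span_base_incl[OF subfield, of Vs] Vs(3) VW by auto
  thus "R.dim K V \<le> R.dim K W"
    using R.independent_length_le_dimension[OF subfield dim_dimension[OF W] Vs(1)] Vs(2) by simp
qed

lemma dim_eq:
  assumes W: "R.finite_dimension K W" and V: "Ksubspace K V" and VW: "V \<subseteq> W"
    and eq: "R.dim K V = R.dim K W"
  shows "V = W"
proof -
  have fV: "R.finite_dimension K V" using dim_mono[OF W V VW] by simp
  obtain Vs where Vs: "R.independent K Vs" "length Vs = R.dim K V" "R.Span K Vs = V"
    using R.exists_base[OF subfield dim_dimension[OF fV]] by blast
  have "set Vs \<subseteq> W" using R.Span_base_incl[OF subfield, of Vs] Vs(3) VW by auto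
  hence "R.Span K Vs = W"
    using R.independent_length_eq_dimension[OF subfield dim_dimension[OF W] Vs(1)] Vs(2) eq by simp
  thus ?thesis using Vs(3) by simp
qed

lemma dim_zero: "R.finite_dimension K V \<Longrightarrow> R.dim K V = 0 \<Longrightarrow> V = {0}"
  using R.dimension_zero[OF subfield] dim_dimension by fastforce

lemma dim_K: "R.dim K K = 1"
  using dimI[OF R.dimension_one[OF subfield]] .

lemma fd_K: "R.finite_dimension K K"
  using R.finite_dimensionI[OF R.dimension_one[OF subfield]] .

lemma lin_combine:
  assumes add: "\<And>x y. f (x + y) = f x + f y" and sc: "\<And>k x. k \<in> K \<Longrightarrow> f (k * x) = k * f x"
    and z: "f 0 = 0"
  shows "set Ks \<subseteq> K \<Longrightarrow> R.combine Ks (map f Us) = f (R.combine Ks Us)"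
proof (induction Us arbitrary: Ks)
  case Nil thus ?case using z by simp
next
  case (Cons u Us)
  show ?case
  proof (cases Ks)
    case Nil thus ?thesis using z by simp
  next
    case (Cons k Ks')
    have k: "k \<in> K" and Ks': "set Ks' \<subseteq> K" using Cons.prems \<open>Ks = k # Ks'\<close> by auto
    have "R.combine Ks (map f (u # Us)) = k * f u + R.combine Ks' (map f Us)"
      using Cons by simp
    also have "\<dots> = f (k * u) + f (R.combine Ks' Us)" using Cons.IH[OF Ks'] sc[OF k] by simp
    also have "\<dots> = f (R.combine Ks (u # Us))" using add \<open>Ks = k # Ks'\<close> by simp
    finally show ?thesis .
  qed
qed

lemma lin_Span:
  assumes add: "\<And>x y. f (x + y) = f x + f y" and sc: "\<And>k x. k \<in> K \<Longrightarrow> f (k * x) = k * f x"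
    and z: "f 0 = 0"
  shows "R.Span K (map f Us) = f ` R.Span K Us"
proof -
  have "R.Span K (map f Us) = {R.combine Ks (map f Us) | Ks. set Ks \<subseteq> K}"
    by (rule R.Span_eq_combine_set[OF subfield]) simp
  also have "\<dots> = f ` {R.combine Ks Us | Ks. set Ks \<subseteq> K}"
  proof (intro equalityI subsetI)
    fix v assume "v \<in> {R.combine Ks (map f Us) | Ks. set Ks \<subseteq> K}"
    then obtain Ks where Ks: "set Ks \<subseteq> K" "v = R.combine Ks (map f Us)" by blast
    hence "v = f (R.combine Ks Us)" using lin_combine[OF add sc z Ks(1)] by simp
    thus "v \<in> f ` {R.combine Ks Us | Ks. set Ks \<subseteq> K}" using Ks(1) by blast
  next
    fix v assume "v \<in> f ` {R.combine Ks Us | Ks. set Ks \<subseteq> K}"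
    then obtain Ks where Ks: "set Ks \<subseteq> K" "v = f (R.combine Ks Us)" by blast
    hence "v = R.combine Ks (map f Us)" using lin_combine[OF add sc z Ks(1)] by simp
    thus "v \<in> {R.combine Ks (map f Us) | Ks. set Ks \<subseteq> K}" using Ks(1) by blast
  qed
  also have "{R.combine Ks Us | Ks. set Ks \<subseteq> K} = R.Span K Us"
    by (rule R.Span_eq_combine_set[OF subfield, symmetric]) simp
  finally show ?thesis .
qed

lemma lin_indep:
  assumes add: "\<And>x y. f (x + y) = f x + f y" and sc: "\<And>k x. k \<in> K \<Longrightarrow> f (k * x) = k * f x"
    and z: "f 0 = 0" and inj: "inj f" and ind: "R.independent K Us"
  shows "R.independent K (map f Us)"
proof (rule R.trivial_combine_imp_independent[OF subfield])
  show "set (map f Us) \<subseteq> carrier RR" by simp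
  fix Ks assume Ks: "set Ks \<subseteq> K" "R.combine Ks (map f Us) = \<zero>\<^bsub>RR\<^esub>"
  hence "f (R.combine Ks Us) = f 0" using lin_combine[OF add sc z Ks(1)] z by simp
  hence "R.combine Ks Us = \<zero>\<^bsub>RR\<^esub>" using inj by (simp add: inj_eq)
  thus "set (take (length (map f Us)) Ks) \<subseteq> {\<zero>\<^bsub>RR\<^esub>}"
    using R.independent_imp_trivial_combine[OF subfield ind Ks(1)] by simp
qed

lemma lin_dim:
  assumes add: "\<And>x y. f (x + y) = f x + f y" and sc: "\<And>k x. k \<in> K \<Longrightarrow> f (k * x) = k * f x"
    and z: "f 0 = 0" and inj: "inj f" and fV: "R.finite_dimension K V"
  shows "R.finite_dimension K (f ` V)" "R.dim K (f ` V) = R.dim K V"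
proof -
  obtain Vs where Vs: "R.independent K Vs" "length Vs = R.dim K V" "R.Span K Vs = V"
    using R.exists_base[OF subfield dim_dimension[OF fV]] by blast
  have I: "R.independent K (map f Vs)" by (rule lin_indep[OF add sc z inj Vs(1)])
  have D0: "R.dimension (length (map f Vs)) K (R.Span K (map f Vs))"
    by (rule R.dimension_independent[OF I])
  have SS: "R.Span K (map f Vs) = f ` V" using lin_Span[OF add sc z, of Vs] Vs(3) by simp
  have D: "R.dimension (length Vs) K (f ` V)" using D0 unfolding SS length_map .
  show "R.finite_dimension K (f ` V)" by (rule R.finite_dimensionI[OF D])
  show "R.dim K (f ` V) = R.dim K V" using dimI[OF D] Vs(2) by simp
qed

lemma lmult_dim:
  assumes "x \<noteq> 0" "R.finite_dimension K V"
  shows "R.finite_dimension K ((\<lambda>y. x * y) ` V)" "R.dim K ((\<lambda>y. x * y) ` V) = R.dim K V"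
proof -
  have sc: "x * (k * y) = k * (x * y)" if "k \<in> K" for k y
    by (metis Kcomm mult.assoc that)
  have inj: "inj (\<lambda>y. x * y)" using assms(1) by (auto intro: injI)
  show "R.finite_dimension K ((\<lambda>y. x * y) ` V)"
    by (rule lin_dim(1)[of "\<lambda>y. x * y", OF distrib_left sc mult_zero_right inj assms(2)])
  show "R.dim K ((\<lambda>y. x * y) ` V) = R.dim K V"
    by (rule lin_dim(2)[of "\<lambda>y. x * y", OF distrib_left sc mult_zero_right inj assms(2)])
qed

lemma rmult_dim:
  assumes "x \<noteq> 0" "R.finite_dimension K V"
  shows "R.finite_dimension K ((\<lambda>y. y * x) ` V)" "R.dim K ((\<lambda>y. y * x) ` V) = R.dim K V"
proof -
  have inj: "inj (\<lambda>y. y * x)" using assms(1) by (auto intro: injI)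
  show "R.finite_dimension K ((\<lambda>y. y * x) ` V)"
    by (rule lin_dim(1)[of "\<lambda>y. y * x", OF distrib_right mult.assoc mult_zero_left inj assms(2)])
  show "R.dim K ((\<lambda>y. y * x) ` V) = R.dim K V"
    by (rule lin_dim(2)[of "\<lambda>y. y * x", OF distrib_right mult.assoc mult_zero_left inj assms(2)])
qed

lemma sub_lmult: assumes V: "Ksubspace K V" shows "Ksubspace K ((\<lambda>y. x * y) ` V)"
  unfolding Ksubspace_def
proof (intro conjI ballI)
  show "0 \<in> (\<lambda>y. x * y) ` V" using V unfolding Ksubspace_def by force
next
  fix a b assume "a \<in> (\<lambda>y. x * y) ` V" "b \<in> (\<lambda>y. x * y) ` V"
  then obtain c d where "a = x * c" "b = x * d" "c \<in> V" "d \<in> V" by blast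
  moreover have "c + d \<in> V" using V \<open>c \<in> V\<close> \<open>d \<in> V\<close> unfolding Ksubspace_def by blast
  moreover have "x * c + x * d = x * (c + d)" by (simp add: distrib_left)
  ultimately show "a + b \<in> (\<lambda>y. x * y) ` V" by (metis image_eqI)
next
  fix k a assume k: "k \<in> K" and "a \<in> (\<lambda>y. x * y) ` V"
  then obtain c where c: "a = x * c" "c \<in> V" by blast
  have "k * c \<in> V" using V c k unfolding Ksubspace_def by blast
  moreover have "k * a = x * (k * c)" using c k by (metis Kcomm mult.assoc)
  ultimately show "k * a \<in> (\<lambda>y. x * y) ` V" by blast
qed

lemma Kspan_mono: assumes "S \<subseteq> T" shows "Kspan K S \<subseteq> Kspan K T"
proof -
  have "S \<subseteq> Kspan K T" using Kspan_superset[of T] assms by blast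
  thus ?thesis by (rule Kspan_least[OF Kspan_sub])
qed

end

locale KLB = KL +
  fixes B :: "'a::division_ring set"
  assumes trans: "\<forall>x. x \<notin> K \<longrightarrow> transcendental_over K x"
    and fdB: "R.finite_dimension K B" and Bnz: "B \<noteq> {0}"
begin

definition P :: "'a set \<Rightarrow> 'a set" where
  "P X = Kspan K (setprod X B)"

lemma subB: "Ksubspace K B" using fd_sub[OF fdB] .

lemma sub_P: "Ksubspace K (P X)" unfolding P_def by (rule Kspan_sub)

lemma P_mono: "X \<subseteq> Y \<Longrightarrow> P X \<subseteq> P Y"
  unfolding P_def setprod_def by (rule Kspan_mono) blast

lemma fd_P: assumes fX: "R.finite_dimension K X" shows "R.finite_dimension K (P X)"
proof -
  obtain Xs where Xs: "R.Span K Xs = X"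
    using R.exists_base[OF subfield dim_dimension[OF fX]] by blast
  obtain Bs where Bs: "R.Span K Bs = B"
    using R.exists_base[OF subfield dim_dimension[OF fdB]] by blast
  define W where "W = Kspan K (setprod (set Xs) (set Bs))"
  have fW: "R.finite_dimension K W" unfolding W_def setprod_def
    by (rule Kspan_finite_fd) (simp add: finite_image_set2)
  have subW: "Ksubspace K W" unfolding W_def by (rule Kspan_sub)
  have T: "B \<subseteq> {b. u * b \<in> W}" if u: "u \<in> set Xs" for u
  proof -
    have "Ksubspace K {b. u * b \<in> W}"
      unfolding Ksubspace_def
    proof (intro conjI ballI)
      show "0 \<in> {b. u * b \<in> W}" using subW unfolding Ksubspace_def by simp
      fix a b assume "a \<in> {b. u * b \<in> W}" "b \<in> {b. u * b \<in> W}"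
      thus "a + b \<in> {b. u * b \<in> W}" using subW unfolding Ksubspace_def by (simp add: distrib_left)
    next
      fix k a assume "k \<in> K" "a \<in> {b. u * b \<in> W}"
      moreover have "u * (k * a) = k * (u * a)" using \<open>k \<in> K\<close> by (metis Kcomm mult.assoc)
      ultimately show "k * a \<in> {b. u * b \<in> W}" using subW unfolding Ksubspace_def by simp
    qed
    moreover have "set Bs \<subseteq> {b. u * b \<in> W}"
      using u Kspan_superset[of "setprod (set Xs) (set Bs)"] unfolding W_def setprod_def by blast
    ultimately have "Kspan K (set Bs) \<subseteq> {b. u * b \<in> W}" by (rule Kspan_least)
    thus ?thesis using Bs Kspan_list by simp
  qed
  have "Ksubspace K {y. \<forall>b\<in>B. y * b \<in> W}"
    unfolding Ksubspace_def
  proof (intro conjI ballI)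
    show "0 \<in> {y. \<forall>b\<in>B. y * b \<in> W}" using subW unfolding Ksubspace_def by simp
    fix a c assume "a \<in> {y. \<forall>b\<in>B. y * b \<in> W}" "c \<in> {y. \<forall>b\<in>B. y * b \<in> W}"
    thus "a + c \<in> {y. \<forall>b\<in>B. y * b \<in> W}" using subW unfolding Ksubspace_def by (simp add: distrib_right)
  next
    fix k a assume "k \<in> K" "a \<in> {y. \<forall>b\<in>B. y * b \<in> W}"
    thus "k * a \<in> {y. \<forall>b\<in>B. y * b \<in> W}" using subW unfolding Ksubspace_def by (simp add: mult.assoc)
  qed
  moreover have "set Xs \<subseteq> {y. \<forall>b\<in>B. y * b \<in> W}" using T by blast
  ultimately have "Kspan K (set Xs) \<subseteq> {y. \<forall>b\<in>B. y * b \<in> W}" by (rule Kspan_least)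
  hence "X \<subseteq> {y. \<forall>b\<in>B. y * b \<in> W}" using Xs Kspan_list by simp
  hence "setprod X B \<subseteq> W" unfolding setprod_def by blast
  hence "P X \<subseteq> W" unfolding P_def using Kspan_least[OF subW] by blast
  thus ?thesis using dim_mono[OF fW sub_P] by blast
qed

lemma P_ssum: "P (ssum X Y) \<subseteq> ssum (P X) (P Y)"
  unfolding P_def[of "ssum X Y"]
proof (rule Kspan_least[OF sub_ssum[OF sub_P sub_P]])
  show "setprod (ssum X Y) B \<subseteq> ssum (P X) (P Y)"
  proof
    fix z assume "z \<in> setprod (ssum X Y) B"
    then obtain w b where wb: "z = w * b" "w \<in> ssum X Y" "b \<in> B"
      unfolding setprod_def by blast
    then obtain x y where xy: "w = x + y" "x \<in> X" "y \<in> Y" unfolding ssum_def by blast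
    have "x * b \<in> setprod X B" "y * b \<in> setprod Y B" using xy wb unfolding setprod_def by blast+
    hence "x * b \<in> P X" "y * b \<in> P Y"
      using Kspan_superset unfolding P_def by blast+
    moreover have "z = x * b + y * b" using wb xy by (simp add: distrib_right)
    ultimately show "z \<in> ssum (P X) (P Y)" unfolding ssum_def by blast
  qed
qed

lemma P_lmult_sub: "P ((\<lambda>y. x * y) ` X) \<subseteq> (\<lambda>y. x * y) ` P X"
  unfolding P_def[of "(\<lambda>y. x * y) ` X"]
proof (rule Kspan_least[OF sub_lmult[OF sub_P]])
  show "setprod ((\<lambda>y. x * y) ` X) B \<subseteq> (\<lambda>y. x * y) ` P X"
  proof
    fix z assume "z \<in> setprod ((\<lambda>y. x * y) ` X) B"
    then obtain w b where wb: "z = w * b" "w \<in> (\<lambda>y. x * y) ` X" "b \<in> B"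
      unfolding setprod_def by blast
    then obtain y where y: "w = x * y" "y \<in> X" by blast
    have "y * b \<in> setprod X B" using y wb unfolding setprod_def by blast
    hence "y * b \<in> P X" using Kspan_superset unfolding P_def by blast
    moreover have "z = x * (y * b)" using wb y by (simp add: mult.assoc)
    ultimately show "z \<in> (\<lambda>y. x * y) ` P X" by (simp only: image_eqI)
  qed
qed

lemma inv_img: fixes x :: 'a assumes "x \<noteq> 0"
  shows "(\<lambda>y. inverse x * y) ` ((\<lambda>y. x * y) ` X) = X"
    and "(\<lambda>y. x * y) ` ((\<lambda>y. inverse x * y) ` X) = X"
proof -
  have h1: "inverse x * (x * y) = y" for y
  proof -
    have "inverse x * (x * y) = (inverse x * x) * y" by (simp only: mult.assoc)
    thus ?thesis using assms by simp
  qed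
  have h2: "x * (inverse x * y) = y" for y
  proof -
    have "x * (inverse x * y) = (x * inverse x) * y" by (simp only: mult.assoc)
    thus ?thesis using assms by simp
  qed
  show "(\<lambda>y. inverse x * y) ` ((\<lambda>y. x * y) ` X) = X" unfolding image_image h1 by simp
  show "(\<lambda>y. x * y) ` ((\<lambda>y. inverse x * y) ` X) = X" unfolding image_image h2 by simp
qed

lemma P_lmult: assumes "x \<noteq> 0" shows "P ((\<lambda>y. x * y) ` X) = (\<lambda>y. x * y) ` P X"
proof
  show "P ((\<lambda>y. x * y) ` X) \<subseteq> (\<lambda>y. x * y) ` P X" by (rule P_lmult_sub)
  have "P X \<subseteq> (\<lambda>y. inverse x * y) ` P ((\<lambda>y. x * y) ` X)"
    using P_lmult_sub[of "inverse x" "(\<lambda>y. x * y) ` X"] inv_img(1)[OF assms, of X] by simp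
  hence "(\<lambda>y. x * y) ` P X \<subseteq> (\<lambda>y. x * y) ` (\<lambda>y. inverse x * y) ` P ((\<lambda>y. x * y) ` X)"
    by (rule image_mono)
  thus "(\<lambda>y. x * y) ` P X \<subseteq> P ((\<lambda>y. x * y) ` X)" unfolding inv_img(2)[OF assms] .
qed

lemma P_K: "P K = B"
proof
  have "setprod K B \<subseteq> B"
  proof
    fix z assume "z \<in> setprod K B"
    then obtain k b where "z = k * b" "k \<in> K" "b \<in> B" unfolding setprod_def by blast
    thus "z \<in> B" using subB unfolding Ksubspace_def by blast
  qed
  thus "P K \<subseteq> B" unfolding P_def by (rule Kspan_least[OF subB])
  show "B \<subseteq> P K"
  proof
    fix b assume "b \<in> B"
    hence "1 * b \<in> setprod K B" using K1 unfolding setprod_def by blast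
    hence "b \<in> setprod K B" by simp
    thus "b \<in> P K" using Kspan_superset unfolding P_def by blast
  qed
qed

lemma dim_le_P: assumes fX: "R.finite_dimension K X" shows "R.dim K X \<le> R.dim K (P X)"
proof -
  have "\<exists>b\<in>B. b \<noteq> 0"
  proof (rule ccontr)
    assume "\<not> (\<exists>b\<in>B. b \<noteq> 0)"
    hence "B \<subseteq> {0}" by blast
    moreover have "0 \<in> B" using subB unfolding Ksubspace_def by simp
    ultimately show False using Bnz by blast
  qed
  then obtain b where b: "b \<in> B" "b \<noteq> 0" by blast
  have "(\<lambda>y. y * b) ` X \<subseteq> setprod X B" using b unfolding setprod_def by blast
  hence "(\<lambda>y. y * b) ` X \<subseteq> P X" using Kspan_superset[of "setprod X B"] unfolding P_def by (rule order_trans)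
  hence "R.dim K ((\<lambda>y. y * b) ` X) \<le> R.dim K (P X)"
    using dim_mono[OF fd_P[OF fX] fd_sub[OF rmult_dim(1)[OF b(2) fX]]] by blast
  thus ?thesis using rmult_dim(2)[OF b(2) fX] by simp
qed

definition SS :: "'a set set" where "SS = {X. R.finite_dimension K X \<and> X \<noteq> {0}}"
definition del :: "'a set \<Rightarrow> nat" where "del X = R.dim K (P X) - R.dim K X"
definition kap :: nat where "kap = (LEAST k. \<exists>X\<in>SS. del X = k)"
definition mm :: nat where "mm = (LEAST d. \<exists>X\<in>SS. del X = kap \<and> R.dim K X = d)"
definition atom :: "'a set \<Rightarrow> bool" where "atom X \<longleftrightarrow> X \<in> SS \<and> del X = kap \<and> R.dim K X = mm"

lemma nonzero_ex: "X \<noteq> {0} \<Longrightarrow> 0 \<in> X \<Longrightarrow> \<exists>x\<in>X. x \<noteq> 0"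
  by blast

lemma K_SS: "K \<in> SS"
proof -
  have "K \<noteq> {0}" using K1 by auto
  thus ?thesis unfolding SS_def using fd_K by simp
qed

lemma kap_le: "X \<in> SS \<Longrightarrow> kap \<le> del X"
  unfolding kap_def by (rule Least_le) blast

lemma ex_kap: "\<exists>X\<in>SS. del X = kap"
  unfolding kap_def by (rule LeastI_ex) (use K_SS in blast)

lemma mm_le: "X \<in> SS \<Longrightarrow> del X = kap \<Longrightarrow> mm \<le> R.dim K X"
  unfolding mm_def by (rule Least_le) blast

lemma ex_atom: "\<exists>X. atom X"
proof -
  have "\<exists>X\<in>SS. del X = kap \<and> R.dim K X = mm"
    unfolding mm_def by (rule LeastI_ex) (use ex_kap in blast)
  thus ?thesis unfolding atom_def by blast
qed

lemma arith_aux: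
  fixes dU dX dY dI pI pU pX pY q k :: nat
  shows "dU = dX + dY - dI \<Longrightarrow> dI \<le> dX \<Longrightarrow> pI \<le> q \<Longrightarrow> pU \<le> pX + pY - q \<Longrightarrow> q \<le> pX
    \<Longrightarrow> dX \<le> pX \<Longrightarrow> dY \<le> pY \<Longrightarrow> dI \<le> pI \<Longrightarrow> dU \<le> pU \<Longrightarrow> k \<le> pI - dI \<Longrightarrow> k \<le> pU - dU
    \<Longrightarrow> pX - dX = k \<Longrightarrow> pY - dY = k \<Longrightarrow> pI - dI = k"
  by arith

lemma atom_inter:
  assumes aX: "atom X" and aY: "atom Y" and ne: "X \<inter> Y \<noteq> {0}"
  shows "X = Y"
proof -
  have fX: "R.finite_dimension K X" and fY: "R.finite_dimension K Y"
    using aX aY unfolding atom_def SS_def by auto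
  have sX: "Ksubspace K X" and sY: "Ksubspace K Y" using fd_sub fX fY by auto
  define I where "I = X \<inter> Y"
  define U where "U = ssum X Y"
  have sI: "Ksubspace K I" unfolding I_def by (rule sub_inter[OF sX sY])
  have fI: "R.finite_dimension K I" using dim_mono(1)[OF fX sI] unfolding I_def by blast
  have dIX: "R.dim K I \<le> R.dim K X" using dim_mono(2)[OF fX sI] unfolding I_def by blast
  have dIY: "R.dim K I \<le> R.dim K Y" using dim_mono(2)[OF fY sI] unfolding I_def by blast
  have fU: "R.finite_dimension K U" unfolding U_def by (rule grassmann(1)[OF fX fY])
  have dU: "R.dim K U = R.dim K X + R.dim K Y - R.dim K I"
    unfolding U_def I_def by (rule grassmann(2)[OF fX fY])
  have XU: "X \<subseteq> U"
  proof
    fix x assume "x \<in> X"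
    moreover have "0 \<in> Y" using sY unfolding Ksubspace_def by simp
    moreover have "x = x + 0" by simp
    ultimately show "x \<in> U" unfolding U_def ssum_def by blast
  qed
  have "X \<noteq> {0}" using aX unfolding atom_def SS_def by simp
  hence "U \<noteq> {0}" using XU sX unfolding Ksubspace_def by blast
  hence USS: "U \<in> SS" using fU unfolding SS_def by simp
  have ISS: "I \<in> SS" using fI ne unfolding SS_def I_def by simp
  have fPX: "R.finite_dimension K (P X)" and fPY: "R.finite_dimension K (P Y)"
    using fd_P fX fY by auto
  have sPXY: "Ksubspace K (P X \<inter> P Y)" by (rule sub_inter[OF sub_P sub_P])
  have fPXY: "R.finite_dimension K (P X \<inter> P Y)" using dim_mono(1)[OF fPX sPXY] by blast
  have "P I \<subseteq> P X \<inter> P Y" unfolding I_def using P_mono by blast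
  hence pI: "R.dim K (P I) \<le> R.dim K (P X \<inter> P Y)" using dim_mono(2)[OF fPXY sub_P] by blast
  have q: "R.dim K (P X \<inter> P Y) \<le> R.dim K (P X)" using dim_mono(2)[OF fPX sPXY] by blast
  have fS: "R.finite_dimension K (ssum (P X) (P Y))" by (rule grassmann(1)[OF fPX fPY])
  have "P U \<subseteq> ssum (P X) (P Y)" unfolding U_def by (rule P_ssum)
  hence "R.dim K (P U) \<le> R.dim K (ssum (P X) (P Y))" using dim_mono(2)[OF fS sub_P] by blast
  hence pU: "R.dim K (P U) \<le> R.dim K (P X) + R.dim K (P Y) - R.dim K (P X \<inter> P Y)"
    using grassmann(2)[OF fPX fPY] by simp
  have kX: "R.dim K (P X) - R.dim K X = kap" using aX unfolding atom_def del_def by blast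
  have kY: "R.dim K (P Y) - R.dim K Y = kap" using aY unfolding atom_def del_def by blast
  have "del I = kap"
    using arith_aux[OF dU dIX pI pU q dim_le_P[OF fX] dim_le_P[OF fY] dim_le_P[OF fI] dim_le_P[OF fU]
        kap_le[OF ISS, unfolded del_def] kap_le[OF USS, unfolded del_def] kX kY]
    unfolding del_def .
  hence "mm \<le> R.dim K I" using mm_le[OF ISS] by simp
  hence e1: "R.dim K I = R.dim K X" and e2: "R.dim K I = R.dim K Y"
    using dIX dIY aX aY unfolding atom_def by auto
  have "I = X" using dim_eq[OF fX sI _ e1] unfolding I_def by blast
  moreover have "I = Y" using dim_eq[OF fY sI _ e2] unfolding I_def by blast
  ultimately show ?thesis by simp
qed

lemma atom_lmult:
  assumes aX: "atom X" and x: "x \<noteq> 0"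
  shows "atom ((\<lambda>y. x * y) ` X)"
proof -
  have fX: "R.finite_dimension K X" and nz: "X \<noteq> {0}" using aX unfolding atom_def SS_def by auto
  have f1: "R.finite_dimension K ((\<lambda>y. x * y) ` X)" by (rule lmult_dim(1)[OF x fX])
  have d1: "R.dim K ((\<lambda>y. x * y) ` X) = R.dim K X" by (rule lmult_dim(2)[OF x fX])
  have d2: "R.dim K (P ((\<lambda>y. x * y) ` X)) = R.dim K (P X)"
    unfolding P_lmult[OF x] by (rule lmult_dim(2)[OF x fd_P[OF fX]])
  have "0 \<in> X" using fd_sub[OF fX] unfolding Ksubspace_def by simp
  then obtain y where y: "y \<in> X" "y \<noteq> 0" using nz by blast
  hence "x * y \<in> (\<lambda>y. x * y) ` X" "x * y \<noteq> 0" using x by auto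
  hence nz1: "(\<lambda>y. x * y) ` X \<noteq> {0}" by blast
  have e: "del ((\<lambda>y. x * y) ` X) = del X" unfolding del_def using d1 d2 by simp
  have "X \<in> SS" "del X = kap" "R.dim K X = mm" using aX unfolding atom_def by blast+
  thus ?thesis using f1 d1 e nz1 unfolding atom_def SS_def by simp
qed

lemma closed_sub_K:
  assumes fH: "R.finite_dimension K H" and one: "1 \<in> H"
    and cl: "\<And>a b. a \<in> H \<Longrightarrow> b \<in> H \<Longrightarrow> a * b \<in> H" and h: "h \<in> H"
  shows "h \<in> K"
proof (rule ccontr)
  assume hK: "h \<notin> K"
  define n where "n = R.dim K H"
  have pw: "h ^ i \<in> H" for i by (induction i) (use one cl h in auto)
  define Us where "Us = map (\<lambda>i. h ^ i) [0..<Suc n]"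
  have setUs: "set Us \<subseteq> H" unfolding Us_def using pw by auto
  have dep: "\<not> R.independent K Us"
  proof
    assume "R.independent K Us"
    hence "length Us \<le> n"
      using R.independent_length_le_dimension[OF subfield dim_dimension[OF fH]] setUs n_def by blast
    thus False unfolding Us_def by simp
  qed
  obtain Ks where Ks: "length Ks = length Us" "R.combine Ks Us = \<zero>\<^bsub>RR\<^esub>" "set Ks \<subseteq> K"
      "set Ks \<noteq> {\<zero>\<^bsub>RR\<^esub>}"
    using R.dependent_imp_non_trivial_combine[OF subfield _ dep] by auto
  have lenUs: "length Us = Suc n" unfolding Us_def by simp
  have "R.combine Ks Us = (\<Sum>i<Suc n. Ks ! i * h ^ i)"
    unfolding combine_sum[OF Ks(1)] lenUs by (intro sum.cong) (auto simp: Us_def nth_append simp del: upt_Suc)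
  hence sum0: "(\<Sum>i\<le>n. Ks ! i * h ^ i) = 0" using Ks(2) lessThan_Suc_atMost by simp
  have "Ks \<noteq> []" using Ks(1) lenUs by auto
  have "\<exists>v\<in>set Ks. v \<noteq> 0"
  proof (rule ccontr)
    assume "\<not> (\<exists>v\<in>set Ks. v \<noteq> 0)"
    hence "set Ks \<subseteq> {0}" by blast
    moreover have "set Ks \<noteq> {}" using \<open>Ks \<noteq> []\<close> by simp
    ultimately have "set Ks = {0}" by (metis subset_singletonD)
    thus False using Ks(4) by simp
  qed
  then obtain v where v: "v \<in> set Ks" "v \<noteq> 0" by blast
  then obtain i where i: "i < length Ks" "Ks ! i = v" by (meson in_set_conv_nth)
  have "algebraic_over K h"
    unfolding algebraic_over_def
  proof (rule exI[of _ "\<lambda>i. Ks ! i"], rule exI[of _ n], intro conjI)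
    show "\<forall>i\<le>n. Ks ! i \<in> K" using Ks(1,3) lenUs by auto
    show "\<exists>i\<le>n. Ks ! i \<noteq> 0" using i v Ks(1) lenUs by (intro exI[of _ i]) auto
    show "(\<Sum>i\<le>n. Ks ! i * h ^ i) = 0" by (rule sum0)
  qed
  thus False using trans hK unfolding transcendental_over_def by blast
qed

lemma kap_val: "kap = R.dim K B - 1"
proof -
  obtain X0 where a0: "atom X0" using ex_atom by blast
  have fX0: "R.finite_dimension K X0" and nz: "X0 \<noteq> {0}" using a0 unfolding atom_def SS_def by auto
  have "0 \<in> X0" using fd_sub[OF fX0] unfolding Ksubspace_def by simp
  then obtain x0 where x0: "x0 \<in> X0" "x0 \<noteq> 0" using nz by blast
  define H where "H = (\<lambda>y. inverse x0 * y) ` X0"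
  have aH: "atom H" unfolding H_def by (rule atom_lmult[OF a0]) (use x0 in simp)
  have fH: "R.finite_dimension K H" using aH unfolding atom_def SS_def by simp
  have sH: "Ksubspace K H" by (rule fd_sub[OF fH])
  have one: "1 \<in> H" unfolding H_def using x0 by (metis image_eqI left_inverse)
  have cl: "a * b \<in> H" if a: "a \<in> H" and b: "b \<in> H" for a b
  proof (cases "a = 0")
    case True thus ?thesis using sH unfolding Ksubspace_def by simp
  next
    case False
    have aH': "atom ((\<lambda>y. inverse a * y) ` H)" by (rule atom_lmult[OF aH]) (use False in simp)
    have "1 \<in> (\<lambda>y. inverse a * y) ` H" using a False by (metis image_eqI left_inverse)
    hence "1 \<in> H \<inter> (\<lambda>y. inverse a * y) ` H" using one by blast
    hence "H \<inter> (\<lambda>y. inverse a * y) ` H \<noteq> {0}" by (metis one_neq_zero singletonD)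
    hence eq: "H = (\<lambda>y. inverse a * y) ` H" using atom_inter[OF aH aH'] by blast
    then obtain c where c: "c \<in> H" "b = inverse a * c" using b by blast
    have "a * b = c" unfolding c(2) using False by (simp add: mult.assoc[symmetric])
    thus ?thesis using c by simp
  qed
  have HK: "H \<subseteq> K" using closed_sub_K[OF fH one cl] by blast
  have KH: "K \<subseteq> H"
  proof
    fix k assume "k \<in> K"
    hence "k * 1 \<in> H" using sH one unfolding Ksubspace_def by blast
    thus "k \<in> H" by simp
  qed
  have "H = K" using HK KH by blast
  hence "del K = kap" using aH unfolding atom_def by simp
  thus ?thesis unfolding del_def P_K dim_K by simp
qed

lemma main_ineq:
  assumes fA: "R.finite_dimension K A" and nz: "A \<noteq> {0}"
  shows "R.dim K A + R.dim K B \<le> R.dim K (P A) + 1"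
proof -
  have "kap \<le> del A" by (rule kap_le) (use fA nz in \<open>simp add: SS_def\<close>)
  moreover have "R.dim K B \<noteq> 0" using dim_zero[OF fdB] Bnz by blast
  moreover have "R.dim K A \<le> R.dim K (P A)" by (rule dim_le_P[OF fA])
  ultimately show ?thesis unfolding kap_val del_def by arith
qed

end

theorem mainTheorem7:
  fixes K :: "'a::division_ring set" and A B :: "'a set"
  assumes "is_subfield K" and "central K"
    and "\<forall>x. x \<notin> K \<longrightarrow> transcendental_over K x"
    and "Ksubspace K A" and "Ksubspace K B"
    and "A \<noteq> {0}" and "B \<noteq> {0}"
    and "Kfindim K A" and "Kfindim K B"
  shows "Kdim K (Kspan K (setprod A B)) + 1 \<ge> Kdim K A + Kdim K B"
proof -
  interpret KL K using assms(1,2) by unfold_locales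
  have fA: "R.finite_dimension K A" using Kfindim_fd assms(8) by blast
  have fB: "R.finite_dimension K B" using Kfindim_fd assms(9) by blast
  interpret KLB K B using assms(3,7) fB by unfold_locales
  have fP: "R.finite_dimension K (P A)" by (rule fd_P[OF fA])
  show ?thesis
    using main_ineq[OF fA assms(6)] Kdim_eq[OF fA] Kdim_eq[OF fB] Kdim_eq[OF fP]
    unfolding P_def by simp
qed

end
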